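(* Let $i$ be a positive integer. Then $\mathcal P_i(s)$ is a nonzero polynomial of degree at most $3i-3$, and $\mathcal Q_i(s)$ is a nonzero polynomial of degree $3i-2$.
   Context: Let $\mathbb F$ be a field of characteristic different from $3$ containing a primitive cube root of unity $\zeta_3$. For $i\in\mathbb Z$ define the rational functions in $\mathbb F(s)$ $$\mathcal P_i(s)=\frac{(s+\zeta_3)^{3i}-(s+\zeta_3^2)^{3i}}{3(\zeta_3-\zeta_3^2)s(s-1)},\qquad \mathcal Q_i(s)=\frac{\frac{1-\zeta_3}{3}(s+\zeta_3)^{3i-1}+\frac{1-\zeta_3^2}{3}(s+\zeta_3^2)^{3i-1}}{s-1}.$$ *)

theory Defs
  imports "HOL-Computational_Algebra.Polynomial" "HOL-Computational_Algebra.Fraction_Field"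
begin

text \<open>The rational function field F(s) is modelled as the fraction field of F[s].\<close>

definition poly_to_ratfun :: "'a::field poly \<Rightarrow> 'a poly fract" where
  "poly_to_ratfun p = Fract p 1"

definition rs :: "'a::field poly fract" where
  "rs = poly_to_ratfun [:0, 1:]"

definition rc :: "'a::field \<Rightarrow> 'a poly fract" where
  "rc c = poly_to_ratfun [:c:]"

definition calP :: "'a::field \<Rightarrow> int \<Rightarrow> 'a poly fract" where
  "calP z i = ((rs + rc z) powi (3 * i) - (rs + rc (z^2)) powi (3 * i)) /
              (rc (3 * (z - z^2)) * rs * (rs - 1))"

definition calQ :: "'a::field \<Rightarrow> int \<Rightarrow> 'a poly fract" where
  "calQ z i = (rc ((1 - z) / 3) * (rs + rc z) powi (3 * i - 1)
             + rc ((1 - z^2) / 3) * (rs + rc (z^2)) powi (3 * i - 1)) / (rs - 1)"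

end

theory Submission
  imports Defs
begin

lemma h_add: "poly_to_ratfun (p + q) = poly_to_ratfun p + poly_to_ratfun (q::'a::field poly)"
  by (simp add: poly_to_ratfun_def)
lemma h_diff: "poly_to_ratfun (p - q) = poly_to_ratfun p - poly_to_ratfun (q::'a::field poly)"
  by (simp add: poly_to_ratfun_def)
lemma h_mult: "poly_to_ratfun (p * q) = poly_to_ratfun p * poly_to_ratfun (q::'a::field poly)"
  by (simp add: poly_to_ratfun_def)
lemma h_one: "(1::'a::field poly fract) = poly_to_ratfun 1"
  by (simp add: poly_to_ratfun_def One_fract_def)
lemma h_power: "poly_to_ratfun (p ^ n) = poly_to_ratfun (p::'a::field poly) ^ n"
  by (induction n) (simp_all add: h_mult h_one[symmetric])
lemma h_eq0: "poly_to_ratfun (p::'a::field poly) = 0 \<longleftrightarrow> p = 0"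
  by (simp add: poly_to_ratfun_def Zero_fract_def eq_fract)

lemma h_div:
  assumes "d \<noteq> 0" "n = d * (p::'a::field poly)"
  shows "poly_to_ratfun n / poly_to_ratfun d = poly_to_ratfun p"
  using assms by (simp add: h_mult h_eq0)

lemma lin_pow: "(rs + rc c) ^ n = poly_to_ratfun ([:c, 1:] ^ n)"
  unfolding rs_def rc_def h_power h_add[symmetric] by simp

theorem lemma3p3:
  fixes z :: "'a::field" and i :: int
  assumes char3: "(3::'a) \<noteq> 0"
    and prim: "z ^ 3 = 1" "z \<noteq> 1"
    and ipos: "i > 0"
  shows "(\<exists>p. p \<noteq> 0 \<and> degree p \<le> nat (3 * i - 3) \<and> calP z i = poly_to_ratfun p)
       \<and> (\<exists>q. q \<noteq> 0 \<and> degree q = nat (3 * i - 2) \<and> calQ z i = poly_to_ratfun q)"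
proof -
  obtain k :: nat where ik: "i = int k + 1"
  proof
    show "i = int (nat (i - 1)) + 1" using ipos by simp
  qed
  have e1: "3 * i = int (3*k+3)" "3 * i - 1 = int (3*k+2)"
    "nat (3 * i - 3) = 3*k" "nat (3 * i - 2) = 3*k+1" using ik by auto
  have z0: "z \<noteq> 0" using prim by auto
  have zz: "z^2 + z + 1 = 0"
  proof -
    have "(z - 1) * (z^2 + z + 1) = 0" using prim(1) by (simp add: algebra_simps power2_eq_square power3_eq_cube)
    then show ?thesis using prim(2) by simp
  qed
  have zw: "z - z^2 \<noteq> 0"
  proof
    assume "z - z^2 = 0"
    then have "z * (1 - z) = 0" by (simp add: algebra_simps power2_eq_square)
    then show False using z0 prim(2) by simp
  qed
  define w where "w = z^2"
  have z3k: "z ^ (3*k) = 1" "w ^ (3*k) = 1"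
  proof -
    show "z ^ (3*k) = 1" by (simp add: power_mult prim(1))
    have "w ^ (3*k) = (z^3) ^ (2*k)" unfolding w_def by (simp flip: power_mult add: mult_ac)
    then show "w ^ (3*k) = 1" using prim(1) by simp
  qed
  have w2: "w^2 = z" "z * w = 1" "1 + z = - w" "1 + w = - z" "w \<noteq> z"
  proof -
    have "w^2 = z^3 * z" unfolding w_def
      by (simp flip: power_mult power_Suc2 add: numeral_eq_Suc)
    then show "w^2 = z" using prim by simp
    show "z * w = 1" unfolding w_def using prim(1) by (simp add: power2_eq_square power3_eq_cube mult.assoc)
    show "1 + z = - w" unfolding w_def eq_neg_iff_add_eq_0 using zz by (simp add: algebra_simps)
    show "1 + w = - z" unfolding w_def eq_neg_iff_add_eq_0 using zz by (simp add: algebra_simps)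
    show "w \<noteq> z" using zw unfolding w_def by simp
  qed
  have w2': "z + 1 = - w" "w + 1 = - z" using w2(3,4) by (simp_all only: add.commute)
  have mon: "degree ([:c, 1:] ^ j) = j \<and> coeff ([:c, 1:] ^ j) j = 1" for c :: 'a and j
    by (metis coeff_linear_power degree_linear_power)
  have hi: "coeff ([:c, 1:] ^ j) t = 0" if "t > j" for c :: 'a and j t
    using mon[of c j] that by (simp add: coeff_eq_0)
  have lin: "rs + rc c = poly_to_ratfun [:c, 1:]" for c :: 'a
    using lin_pow[of c 1] by simp
  have w3: "w^3 = 1"
  proof -
    have "w^3 = (z^3)^2" unfolding w_def by (simp flip: power_mult)
    then show ?thesis using prim(1) by simp
  qed
  have xm1: "[:0, 1:] - 1 = [:-1, 1::'a:]" by (simp add: one_pCons)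
  have P: "\<exists>p. p \<noteq> 0 \<and> degree p \<le> nat (3 * i - 3) \<and> calP z i = poly_to_ratfun p"
  proof -
    define n where "n = 3*k+3"
    define A where "A = [:z, 1:] ^ n"
    define B where "B = [:w, 1:] ^ n"
    define c where "c = 3 * (z - w)"
    define d where "d = [:c:] * [:0, 1:] * [:-1, 1:]"
    have c0: "c \<noteq> 0" using char3 zw unfolding c_def w_def by simp
    have d0: "d \<noteq> 0" using c0 unfolding d_def by simp
    have degd: "degree d = 2" using c0 unfolding d_def by (simp add: degree_mult_eq)
    have cP: "calP z i = poly_to_ratfun (A - B) / poly_to_ratfun d"
      unfolding calP_def e1(1) power_int_of_nat lin_pow h_diff A_def B_def n_def w_def
        d_def h_mult c_def
      by (simp add: rs_def rc_def h_one xm1 flip: h_diff)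
    have N0: "poly (A - B) 0 = 0"
      using z3k unfolding A_def B_def n_def by (simp add: power_add prim(1) w3 flip: w_def)
    then obtain r where r: "A - B = [:0, 1:] * r"
      by (metis poly_eq_0_iff_dvd dvdE minus_zero)
    have zn: "z ^ n = 1" "w ^ n = 1" using z3k prim(1) w3 by (simp_all add: n_def power_add)
    have "poly (A - B) 1 = (z + 1) ^ n - (w + 1) ^ n"
      unfolding A_def B_def by simp
    also have "\<dots> = (-1)^n * w^n - (-1)^n * z^n" unfolding w2' by (simp only: power_minus[of w n] power_minus[of z n])
    finally have "poly (A - B) 1 = 0" using zn by simp
    then have "poly r 1 = 0" using r by simp
    then obtain p0 where p0: "r = [:-1, 1:] * p0"
      by (metis poly_eq_0_iff_dvd dvdE)
    define p where "p = smult (1/c) p0"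
    have cp: "[:c:] * p = p0" using c0 by (simp add: p_def)
    have Nd: "A - B = d * p" unfolding r p0 d_def cp[symmetric]
      by (simp only: mult_ac)
    have "poly (A - B) (-z) \<noteq> 0"
      unfolding A_def B_def n_def using w2(5) by (simp add: zero_power)
    then have "A - B \<noteq> 0" by auto
    then have p0': "p \<noteq> 0" using Nd by auto
    have "degree (A - B) \<le> n - 1"
    proof (rule degree_le, intro allI impI)
      fix t assume "n - 1 < t"
      then have "t = n \<or> t > n" by (auto simp: n_def)
      then show "coeff (A - B) t = 0"
        using mon[of z n] mon[of w n] hi[of n t z] hi[of n t w] unfolding A_def B_def by auto
    qed
    then have "degree p \<le> 3*k" using Nd degd d0 p0' by (simp add: degree_mult_eq n_def)
    then show ?thesis using p0' cP Nd d0 h_div e1 by metis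
  qed
  have Q: "\<exists>q. q \<noteq> 0 \<and> degree q = nat (3 * i - 2) \<and> calQ z i = poly_to_ratfun q"
  proof -
    define m where "m = 3*k+2"
    define a where "a = (1 - z) / 3"
    define b where "b = (1 - w) / 3"
    define N where "N = [:a:] * ([:z, 1:] ^ m) + [:b:] * ([:w, 1:] ^ m)"
    have cQ: "calQ z i = poly_to_ratfun N / poly_to_ratfun [:-1, 1:]"
      unfolding calQ_def e1(2) power_int_of_nat lin_pow N_def m_def a_def b_def w_def
      unfolding rs_def rc_def h_one
      by (simp only: xm1 flip: h_mult h_add h_diff)
    have zpw: "z + w = -1" unfolding w_def eq_neg_iff_add_eq_0 using zz by (simp add: algebra_simps)
    have "(1 - z) + (1 - w) = 2 - (z + w)" by (simp add: algebra_simps)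
    also have "\<dots> = 3" using zpw by simp
    finally have s3: "(1 - z) + (1 - w) = 3" .
    have "a + b = ((1 - z) + (1 - w)) / 3" unfolding a_def b_def by (rule add_divide_distrib[symmetric])
    then have ab: "a + b = 1" using s3 char3 by simp
    have cm: "coeff N m = 1" using mon[of z m] mon[of w m] ab unfolding N_def by simp
    have d1: "degree ([:a:] * [:z, 1:] ^ m) \<le> m"
      using degree_mult_le[of "[:a:]" "[:z, 1:] ^ m"] mon[of z m] by simp
    have d2: "degree ([:b:] * [:w, 1:] ^ m) \<le> m"
      using degree_mult_le[of "[:b:]" "[:w, 1:] ^ m"] mon[of w m] by simp
    have "degree N \<le> m"
      unfolding N_def using d1 d2 degree_add_le by blast
    then have dN: "degree N = m" using cm by (metis le_degree order_antisym zero_neq_one)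
    have "poly N 1 = 0"
    proof -
      have e: "(-w)^m = (-1)^m * z" "(-z)^m = (-1)^m * w"
      proof -
        have "w^m = z" "z^m = w" using z3k w2(1) by (simp_all add: m_def power_add w_def power2_eq_square)
        then show "(-w)^m = (-1)^m * z" "(-z)^m = (-1)^m * w"
          by (simp_all only: power_minus[of w m] power_minus[of z m])
      qed
      have "poly N 1 = a * (-1)^m * z + b * (-1)^m * w"
        unfolding N_def by (simp add: w2' e)
      also have "\<dots> = (-1)^m * (a * z + b * w)" by (simp add: algebra_simps)
      also have "a * z + b * w = ((1 - z) * z + (1 - w) * w) / 3"
        unfolding a_def b_def add_divide_distrib by simp
      also have "(1 - z) * z + (1 - w) * w = 0"
        using w2(1) unfolding w_def by (simp add: algebra_simps power2_eq_square)
      finally show ?thesis by simp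
    qed
    then obtain q where q: "N = [:-1, 1:] * q"
      by (metis poly_eq_0_iff_dvd dvdE)
    have "N \<noteq> 0" using cm by auto
    then have q0: "q \<noteq> 0" using q by auto
    have "degree N = degree [:-1, 1::'a:] + degree q" unfolding q
      by (rule degree_mult_eq) (simp_all add: q0)
    then have "degree q = 3*k+1" using dN by (simp add: m_def)
    then show ?thesis using q0 cQ q h_div e1 by (metis pCons_eq_0_iff one_neq_zero)
  qed
  show ?thesis using P Q by blast
qed

end
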